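(* Let $F:\mathbb{R}^d\to\mathbb{R}^d$ be $L$-Lipschitz, $G:\mathbb{R}^d\rightrightarrows\mathbb{R}^d$ maximally monotone, the solution set of $0\in F(x)+G(x)$ nonempty, and suppose $x^\star$ is a solution satisfying $\langle u,x-x^\star\rangle\ge-\rho\|u\|^2$ for all $(x,u)$ in the graph of $F+G$, with $\rho>0$. Let $\eta>\rho$, $\alpha=1-\frac\rho\eta$, $x_0\in\mathbb{R}^d$, and suppose $(x_k)$ satisfies $x_{k+1}=(1-\alpha)x_k+\alpha\widetilde J_k$ for $k\ge0$, where the points $\widetilde J_k$ satisfy $\|J_{\eta(F+G)}(x_k)-\widetilde J_k\|\le\varepsilon_k$ for some $\varepsilon_k>0$. Then for $K\ge1$, $$\sum_{k=0}^{K-1}\|(\mathrm{Id}-J_{\eta(F+G)})(x_k)\|^2-\frac{2\eta^2}{(\eta-\rho)^2}\|x_0-x^\star\|^2\le6\sum_{k=0}^{K-1}\varepsilon_k^2+\frac{4\eta}{\eta-\rho}\sum_{k=0}^{K-1}\|x_k-x^\star\|\varepsilon_k,$$ and $\|x_k-x^\star\|\le\|x_{k-1}-x^\star\|+\alpha\varepsilon_{k-1}$ for $k\ge1$.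
   Context: For an operator $A$, $J_A=(\mathrm{Id}+A)^{-1}$ is its resolvent. Here $\eta$ is additionally such that the resolvent $J_{\eta(F+G)}$ is evaluated at the iterates. *)

theory Defs
  imports "HOL-Analysis.Analysis"
begin

definition monotone_op :: "('a::real_inner \<Rightarrow> 'a set) \<Rightarrow> bool" where
  "monotone_op A \<longleftrightarrow>
     (\<forall>x y u v. u \<in> A x \<longrightarrow> v \<in> A y \<longrightarrow> inner (u - v) (x - y) \<ge> 0)"

definition maximally_monotone :: "('a::real_inner \<Rightarrow> 'a set) \<Rightarrow> bool" where
  "maximally_monotone A \<longleftrightarrow> monotone_op A \<and>
     (\<forall>x u. (\<forall>y v. v \<in> A y \<longrightarrow> inner (u - v) (x - y) \<ge> 0) \<longrightarrow> u \<in> A x)"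

definition op_sum :: "('a::real_vector \<Rightarrow> 'a) \<Rightarrow> ('a \<Rightarrow> 'a set) \<Rightarrow> 'a \<Rightarrow> 'a set" where
  "op_sum F G x = (\<lambda>u. F x + u) ` G x"

definition op_scale :: "real \<Rightarrow> ('a::real_vector \<Rightarrow> 'a set) \<Rightarrow> 'a \<Rightarrow> 'a set" where
  "op_scale c A x = (\<lambda>u. c *\<^sub>R u) ` A x"

text \<open>Resolvent J_A = (Id + A)^{-1}, as a set-valued map:
  p \<in> J_A x iff x \<in> p + A p.\<close>
definition resolvent :: "('a::real_vector \<Rightarrow> 'a set) \<Rightarrow> 'a \<Rightarrow> 'a set" where
  "resolvent A x = {p. x - p \<in> A p}"

end

theory Submission
  imports Defs
begin

theorem lemma3p5:
  fixes F :: "'a::euclidean_space \<Rightarrow> 'a" and G :: "'a \<Rightarrow> 'a set"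
    and L \<rho> \<eta> \<alpha> :: real and xstar :: 'a
    and x Jt J :: "nat \<Rightarrow> 'a" and \<epsilon> :: "nat \<Rightarrow> real"
  assumes F_lip: "L-lipschitz_on UNIV F"
    and G_mm: "maximally_monotone G"
    and sol_nonempty: "{z. 0 \<in> op_sum F G z} \<noteq> {}"
    and xstar_sol: "0 \<in> op_sum F G xstar"
    and weak_mvi: "\<And>y u. u \<in> op_sum F G y \<Longrightarrow> inner u (y - xstar) \<ge> - \<rho> * (norm u)\<^sup>2"
    and rho_pos: "\<rho> > 0"
    and eta_gt: "\<eta> > \<rho>"
    and alpha_def: "\<alpha> = 1 - \<rho> / \<eta>"
    and J_res: "\<And>k. resolvent (op_scale \<eta> (op_sum F G)) (x k) = {J k}"
    and iter: "\<And>k. x (Suc k) = (1 - \<alpha>) *\<^sub>R x k + \<alpha> *\<^sub>R Jt k"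
    and inexact: "\<And>k. norm (J k - Jt k) \<le> \<epsilon> k"
    and eps_pos: "\<And>k. \<epsilon> k > 0"
  shows "(\<forall>K\<ge>1. (\<Sum>k<K. (norm (x k - J k))\<^sup>2)
                 - 2 * \<eta>\<^sup>2 / (\<eta> - \<rho>)\<^sup>2 * (norm (x 0 - xstar))\<^sup>2
               \<le> 6 * (\<Sum>k<K. (\<epsilon> k)\<^sup>2)
                 + 4 * \<eta> / (\<eta> - \<rho>) * (\<Sum>k<K. norm (x k - xstar) * \<epsilon> k))
      \<and> (\<forall>k\<ge>1. norm (x k - xstar) \<le> norm (x (k - 1) - xstar) + \<alpha> * \<epsilon> (k - 1))"
proof -
  have eta_pos: "\<eta> > 0" using rho_pos eta_gt by linarith
  have alpha_pos: "\<alpha> > 0" using eta_gt eta_pos by (simp add: alpha_def field_simps)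
  have alpha_eq: "\<alpha> = (\<eta> - \<rho>) / \<eta>" using eta_pos by (simp add: alpha_def field_simps)
  have step: "\<alpha>\<^sup>2 * (norm (x k - J k))\<^sup>2 \<le> (norm (x k - xstar))\<^sup>2 - (norm (x (Suc k) - xstar))\<^sup>2
       + 2 * \<alpha> * (norm (x k - xstar) * \<epsilon> k) + \<alpha>\<^sup>2 * (\<epsilon> k)\<^sup>2
     \<and> norm (x (Suc k) - xstar) \<le> norm (x k - xstar) + \<alpha> * \<epsilon> k" for k
  proof -
    define r where "r = x k - J k"
    define a where "a = x k - xstar"
    define e where "e = Jt k - J k"
    define b where "b = a - \<alpha> *\<^sub>R r"
    have "J k \<in> resolvent (op_scale \<eta> (op_sum F G)) (x k)" using J_res by simp
    then obtain u where u: "u \<in> op_sum F G (J k)" and ru: "r = \<eta> *\<^sub>R u"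
      by (auto simp: resolvent_def op_scale_def r_def)
    have "inner u (J k - xstar) \<ge> - \<rho> * (norm u)\<^sup>2" using weak_mvi[OF u] .
    hence "\<eta> * \<eta> * inner u (J k - xstar) \<ge> \<eta> * \<eta> * (- \<rho> * (norm u)\<^sup>2)"
      using eta_pos by (intro mult_left_mono) auto
    hence "\<eta> * inner r (J k - xstar) \<ge> - \<rho> * (norm r)\<^sup>2"
      using eta_pos by (simp add: ru power2_eq_square algebra_simps)
    hence i1: "inner r (J k - xstar) \<ge> - (\<rho>/\<eta>) * (norm r)\<^sup>2"
      using eta_pos by (simp add: field_simps)
    have "a = r + (J k - xstar)" by (simp add: a_def r_def)
    hence "inner r a = (norm r)\<^sup>2 + inner r (J k - xstar)"
      by (simp add: inner_add_right power2_norm_eq_inner)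
    hence ira: "inner r a \<ge> \<alpha> * (norm r)\<^sup>2" using i1 by (simp add: alpha_def algebra_simps)
    have "(norm b)\<^sup>2 = (norm a)\<^sup>2 - 2 * \<alpha> * inner r a + \<alpha>\<^sup>2 * (norm r)\<^sup>2"
      unfolding b_def power2_norm_eq_inner
      by (simp add: inner_diff_left inner_diff_right inner_commute power2_eq_square algebra_simps)
    also have "\<dots> \<le> (norm a)\<^sup>2 - \<alpha>\<^sup>2 * (norm r)\<^sup>2"
    proof -
      have "2 * \<alpha> * inner r a \<ge> 2 * \<alpha> * (\<alpha> * (norm r)\<^sup>2)" using ira alpha_pos by simp
      thus ?thesis by (simp add: power2_eq_square algebra_simps)
    qed
    finally have nb: "(norm b)\<^sup>2 \<le> (norm a)\<^sup>2 - \<alpha>\<^sup>2 * (norm r)\<^sup>2" .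
    hence "(norm b)\<^sup>2 \<le> (norm a)\<^sup>2" by (smt (verit) zero_le_power2 mult_nonneg_nonneg)
    hence nba: "norm b \<le> norm a" using norm_ge_zero power2_le_imp_le by blast
    have ne: "norm e \<le> \<epsilon> k" using inexact[of k] by (simp add: e_def norm_minus_commute)
    have xs: "x (Suc k) - xstar = b + \<alpha> *\<^sub>R e"
      by (simp add: iter b_def a_def r_def e_def algebra_simps)
    have "(norm (b + \<alpha> *\<^sub>R e))\<^sup>2 = (norm b)\<^sup>2 + 2 * \<alpha> * inner b e + \<alpha>\<^sup>2 * (norm e)\<^sup>2"
      unfolding power2_norm_eq_inner
      by (simp add: inner_add_left inner_add_right inner_commute power2_eq_square algebra_simps)
    also have "\<dots> \<le> (norm b)\<^sup>2 + 2 * \<alpha> * (norm a * \<epsilon> k) + \<alpha>\<^sup>2 * (\<epsilon> k)\<^sup>2"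
    proof -
      have "inner b e \<le> norm b * norm e" by (rule norm_cauchy_schwarz)
      also have "\<dots> \<le> norm a * \<epsilon> k" using nba ne by (intro mult_mono) auto
      finally have "2 * \<alpha> * inner b e \<le> 2 * \<alpha> * (norm a * \<epsilon> k)" using alpha_pos by simp
      moreover have "(norm e)\<^sup>2 \<le> (\<epsilon> k)\<^sup>2" using ne by (intro power_mono) auto
      hence "\<alpha>\<^sup>2 * (norm e)\<^sup>2 \<le> \<alpha>\<^sup>2 * (\<epsilon> k)\<^sup>2" by (intro mult_left_mono) auto
      ultimately show ?thesis by linarith
    qed
    finally have A: "\<alpha>\<^sup>2 * (norm r)\<^sup>2 \<le> (norm a)\<^sup>2 - (norm (x (Suc k) - xstar))\<^sup>2
       + 2 * \<alpha> * (norm a * \<epsilon> k) + \<alpha>\<^sup>2 * (\<epsilon> k)\<^sup>2" using nb xs by simp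
    have "norm (x (Suc k) - xstar) \<le> norm b + norm (\<alpha> *\<^sub>R e)" unfolding xs by (rule norm_triangle_ineq)
    also have "\<dots> \<le> norm a + \<alpha> * \<epsilon> k"
    proof -
      have "\<alpha> * norm e \<le> \<alpha> * \<epsilon> k" using ne alpha_pos by (intro mult_left_mono) auto
      moreover have "norm (\<alpha> *\<^sub>R e) = \<alpha> * norm e" using alpha_pos by simp
      ultimately show ?thesis using nba by linarith
    qed
    finally show ?thesis using A by (simp add: a_def r_def)
  qed
  have tele: "\<alpha>\<^sup>2 * (\<Sum>k<K. (norm (x k - J k))\<^sup>2) \<le> (norm (x 0 - xstar))\<^sup>2 - (norm (x K - xstar))\<^sup>2
      + 2 * \<alpha> * (\<Sum>k<K. norm (x k - xstar) * \<epsilon> k) + \<alpha>\<^sup>2 * (\<Sum>k<K. (\<epsilon> k)\<^sup>2)" for K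
  proof (induction K)
    case 0 then show ?case by simp
  next
    case (Suc K)
    from step[of K] have "\<alpha>\<^sup>2 * (norm (x K - J K))\<^sup>2 \<le> (norm (x K - xstar))\<^sup>2 - (norm (x (Suc K) - xstar))\<^sup>2
       + 2 * \<alpha> * (norm (x K - xstar) * \<epsilon> K) + \<alpha>\<^sup>2 * (\<epsilon> K)\<^sup>2" by blast
    with Suc show ?case by (simp add: algebra_simps)
  qed
  have part1: "(\<Sum>k<K. (norm (x k - J k))\<^sup>2)
                 - 2 * \<eta>\<^sup>2 / (\<eta> - \<rho>)\<^sup>2 * (norm (x 0 - xstar))\<^sup>2
               \<le> 6 * (\<Sum>k<K. (\<epsilon> k)\<^sup>2)
                 + 4 * \<eta> / (\<eta> - \<rho>) * (\<Sum>k<K. norm (x k - xstar) * \<epsilon> k)" for K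
  proof -
    define S where "S = (\<Sum>k<K. (norm (x k - J k))\<^sup>2)"
    define T where "T = (\<Sum>k<K. norm (x k - xstar) * \<epsilon> k)"
    define E where "E = (\<Sum>k<K. (\<epsilon> k)\<^sup>2)"
    define n0 where "n0 = (norm (x 0 - xstar))\<^sup>2"
    have T0: "T \<ge> 0" unfolding T_def using eps_pos by (intro sum_nonneg) (simp add: less_imp_le)
    have E0: "E \<ge> 0" unfolding E_def by (intro sum_nonneg) auto
    have n00: "n0 \<ge> 0" unfolding n0_def by simp
    have "\<alpha>\<^sup>2 * S \<le> n0 + 2 * \<alpha> * T + \<alpha>\<^sup>2 * E"
      using tele[of K] unfolding S_def T_def E_def n0_def by (smt (verit) zero_le_power2)
    hence "S \<le> n0 / \<alpha>\<^sup>2 + 2 * T / \<alpha> + E" using alpha_pos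
      by (simp add: field_simps power2_eq_square)
    moreover have "n0 / \<alpha>\<^sup>2 = \<eta>\<^sup>2 / (\<eta> - \<rho>)\<^sup>2 * n0" using eta_pos eta_gt
      by (simp add: alpha_eq field_simps power2_eq_square)
    moreover have "2 * T / \<alpha> = 2 * \<eta> / (\<eta> - \<rho>) * T" using eta_pos eta_gt
      by (simp add: alpha_eq field_simps)
    moreover have "0 \<le> \<eta>\<^sup>2 / (\<eta> - \<rho>)\<^sup>2 * n0" using n00 by simp
    moreover have "0 \<le> 2 * \<eta> / (\<eta> - \<rho>) * T" using T0 eta_pos eta_gt by simp
    moreover have "2 * \<eta>\<^sup>2 / (\<eta> - \<rho>)\<^sup>2 * n0 = 2 * (\<eta>\<^sup>2 / (\<eta> - \<rho>)\<^sup>2 * n0)" by simp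
    moreover have "4 * \<eta> / (\<eta> - \<rho>) * T = 2 * (2 * \<eta> / (\<eta> - \<rho>) * T)" by simp
    ultimately have "S - 2 * \<eta>\<^sup>2 / (\<eta> - \<rho>)\<^sup>2 * n0 \<le> 6 * E + 4 * \<eta> / (\<eta> - \<rho>) * T"
      using E0 by linarith
    thus ?thesis unfolding S_def T_def E_def n0_def .
  qed
  show ?thesis
  proof (intro conjI allI impI)
    fix K :: nat show "(\<Sum>k<K. (norm (x k - J k))\<^sup>2)
                 - 2 * \<eta>\<^sup>2 / (\<eta> - \<rho>)\<^sup>2 * (norm (x 0 - xstar))\<^sup>2
               \<le> 6 * (\<Sum>k<K. (\<epsilon> k)\<^sup>2)
                 + 4 * \<eta> / (\<eta> - \<rho>) * (\<Sum>k<K. norm (x k - xstar) * \<epsilon> k)" by (rule part1)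
  next
    fix k :: nat assume "k \<ge> 1"
    then obtain m where "k = Suc m" by (cases k) auto
    thus "norm (x k - xstar) \<le> norm (x (k - 1) - xstar) + \<alpha> * \<epsilon> (k - 1)" using step[of m] by simp
  qed
qed

end
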